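(* In the setting of the context, \[ \lim_{u\to u_\infty+0}\psi(u)=0,\qquad \lim_{u\to u_\infty+0}\Bigl(\tilde E e^{-\delta\varphi(u)}+\tilde S e^{(\beta/\gamma)\tilde R}e^{-\delta\varphi(u)}\int_u^{u_0}e^{\delta\varphi(v)}dv\Bigr)=0 . \]
   Context: Let $\beta,\gamma,\delta>0$ be constants and $\tilde S,\tilde E,\tilde I,\tilde R$ real numbers with $N:=\tilde S+\tilde E+\tilde I+\tilde R>0$. Standing assumptions: (A1) $\tilde I>0$; (A2) $\tilde E>(\gamma/\delta)\tilde I$; (A3) $\tilde S>\delta\tilde E/(\beta\tilde I)$; (A4) $\tilde R\ge 0$ and $N>\tilde S e^{(\beta/\gamma)\tilde R}+\tilde R$. Let $\alpha$ be the unique solution in $(\tilde R,N)$ of $x=N-\tilde S e^{(\beta/\gamma)\tilde R}e^{-(\beta/\gamma)x}$, and assume (A5) $\tilde S<(\gamma/\beta)e^{(\beta/\gamma)(\alpha-\tilde R)}$. Put $u_0:=e^{-(\beta/\gamma)\tilde R}$, $u_\infty:=e^{-(\beta/\gamma)\alpha}$. Let $\psi$ be the unique function, continuous and positive on $(u_\infty,u_0]$ and $C^1$ on $(u_\infty,u_0)$, satisfying $\psi'(u)\psi(u)-\frac{\gamma+\delta}{u}\psi(u)=-\delta\,\frac{\beta N-\beta\tilde S e^{(\beta/\gamma)\tilde R}u+\gamma\log u}{u}$ on $(u_\infty,u_0)$ and $\psi(u_0)=\beta\tilde I$. Let $\varphi(u):=\int_u^{u_0}\frac{d\xi}{\xi\psi(\xi)}$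 for $u\in(u_\infty,u_0]$. *)

theory Defs
  imports "HOL-Analysis.Analysis"
begin

end

theory Submission
  imports Defs
begin

lemma deriv_integral_lower:
  fixes f :: "real \<Rightarrow> real"
  assumes c: "continuous_on {a..b} f" and x: "a < x" "x < b"
  shows "((\<lambda>u. integral {u..b} f) has_real_derivative (- f x)) (at x)"
proof -
  have int: "f integrable_on {a..b}" using c integrable_continuous_interval by blast
  have eq: "integral {u..b} f = integral {a..b} f - integral {a..u} f" if "u \<in> {a..b}" for u
    using Henstock_Kurzweil_Integration.integral_combine[of a u b f] int that by auto
  have "((\<lambda>u. integral {a..u} f) has_vector_derivative f x) (at x within {a..b})"
    using integral_has_vector_derivative[OF c] x by auto
  then have d: "((\<lambda>u. integral {a..u} f) has_real_derivative f x) (at x)"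
    using x by (simp add: has_real_derivative_iff_has_vector_derivative at_within_Icc_at)
  have "((\<lambda>u. integral {a..b} f - integral {a..u} f) has_real_derivative (0 - f x)) (at x)"
    by (intro DERIV_diff DERIV_const d)
  then have d2: "((\<lambda>u. integral {a..b} f - integral {a..u} f) has_real_derivative (- f x)) (at x)"
    by simp
  show ?thesis
  proof (rule has_field_derivative_transform_within_open[OF d2, of "{a<..<b}"])
    show "open {a<..<b}" by simp
    show "x \<in> {a<..<b}" using x by simp
    fix z assume "z \<in> {a<..<b}"
    then have "z \<in> {a..b}" by simp
    from eq[OF this] show "integral {a..b} f - integral {a..z} f = integral {z..b} f"
      by simp
  qed
qed

theorem proposition2:
  fixes \<beta> \<gamma> \<delta> S E I R N \<alpha> u0 uinf :: real
    and \<psi> \<psi>' \<phi> :: "real \<Rightarrow> real"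
  assumes pos: "\<beta> > 0" "\<gamma> > 0" "\<delta> > 0"
    and N_def: "N = S + E + I + R"
    and N_pos: "N > 0"
    and A1: "I > 0"
    and A2: "E > (\<gamma> / \<delta>) * I"
    and A3: "S > \<delta> * E / (\<beta> * I)"
    and A4: "R \<ge> 0" "N > S * exp ((\<beta> / \<gamma>) * R) + R"
    and alpha_mem: "\<alpha> \<in> {R<..<N}"
    and alpha_eq: "\<alpha> = N - S * exp ((\<beta> / \<gamma>) * R) * exp (- (\<beta> / \<gamma>) * \<alpha>)"
    and alpha_uniq: "\<forall>x\<in>{R<..<N}. x = N - S * exp ((\<beta> / \<gamma>) * R) * exp (- (\<beta> / \<gamma>) * x) \<longrightarrow> x = \<alpha>"
    and A5: "S < (\<gamma> / \<beta>) * exp ((\<beta> / \<gamma>) * (\<alpha> - R))"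
    and u0_def: "u0 = exp (- (\<beta> / \<gamma>) * R)"
    and uinf_def: "uinf = exp (- (\<beta> / \<gamma>) * \<alpha>)"
    and psi_cont: "continuous_on {uinf<..u0} \<psi>"
    and psi_pos: "\<forall>u\<in>{uinf<..u0}. \<psi> u > 0"
    and psi_deriv: "\<forall>u\<in>{uinf<..<u0}. (\<psi> has_real_derivative \<psi>' u) (at u)"
    and psi'_cont: "continuous_on {uinf<..<u0} \<psi>'"
    and psi_ode: "\<forall>u\<in>{uinf<..<u0}. \<psi>' u * \<psi> u - (\<gamma> + \<delta>) / u * \<psi> u
        = - \<delta> * (\<beta> * N - \<beta> * S * exp ((\<beta> / \<gamma>) * R) * u + \<gamma> * ln u) / u"
    and psi_init: "\<psi> u0 = \<beta> * I"
    and phi_def: "\<forall>u\<in>{uinf<..u0}. \<phi> u = integral {u..u0} (\<lambda>\<xi>. 1 / (\<xi> * \<psi> \<xi>))"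
  shows "(\<psi> \<longlongrightarrow> 0) (at_right uinf) \<and>
     ((\<lambda>u. E * exp (- \<delta> * \<phi> u)
              + S * exp ((\<beta> / \<gamma>) * R) * exp (- \<delta> * \<phi> u)
                * integral {u..u0} (\<lambda>v. exp (\<delta> * \<phi> v))) \<longlongrightarrow> 0) (at_right uinf)"
proof -
  define K where "K = S * exp ((\<beta> / \<gamma>) * R)"
  define F where "F = (\<lambda>u::real. \<delta> * (\<beta> * N - \<beta> * K * u + \<gamma> * ln u))"
  define e where "e = (\<lambda>u. F u - \<delta> * \<psi> u)"
  have E_pos: "E > 0"
    using A2 A1 pos by (smt (verit) divide_pos_pos mult_pos_pos)
  have S_pos: "S > 0"
    using A3 E_pos A1 pos by (smt (verit) divide_pos_pos mult_pos_pos)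
  have K_pos: "K > 0" unfolding K_def using S_pos by simp
  have uinf_pos: "uinf > 0" unfolding uinf_def by simp
  have uinf_u0: "uinf < u0" unfolding uinf_def u0_def
    using alpha_mem pos by (simp add: divide_strict_right_mono mult_strict_left_mono)
  have F_u0: "F u0 = \<delta> * \<beta> * (E + I)"
  proof -
    have "K * u0 = S" unfolding K_def u0_def
      by (simp add: mult.assoc exp_add[symmetric])
    moreover have "\<gamma> * ln u0 = - \<beta> * R" unfolding u0_def using pos by simp
    ultimately show ?thesis unfolding F_def N_def
      by (simp add: algebra_simps)
  qed
  have e_u0: "e u0 > 0"
    unfolding e_def F_u0 psi_init using pos E_pos by (simp add: algebra_simps)
  have F_uinf: "F uinf = 0"
  proof -
    have k1: "K * uinf = N - \<alpha>" unfolding K_def uinf_def using alpha_eq by simp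
    have k2: "\<beta> * K * uinf = \<beta> * (N - \<alpha>)" using k1 by (simp add: mult.assoc)
    have k3: "\<gamma> * ln uinf = - \<beta> * \<alpha>" unfolding uinf_def using pos by simp
    have "F uinf = \<delta> * (\<beta> * N - \<beta> * K * uinf + \<gamma> * ln uinf)" by (simp add: F_def)
    also have "\<dots> = \<delta> * (\<beta> * N - \<beta> * (N - \<alpha>) + (- \<beta> * \<alpha>))" by (simp only: k2 k3)
    also have "\<dots> = 0" by (simp add: algebra_simps)
    finally show ?thesis .
  qed
  have F_cont: "continuous_on {uinf<..} F"
    unfolding F_def by (intro continuous_intros) (use uinf_pos in auto)
  have F_deriv: "(F has_real_derivative \<delta> * (- \<beta> * K + \<gamma> / u)) (at u)" if "u > 0" for u
    unfolding F_def using that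
    by (auto intro!: derivative_eq_intros simp: field_simps)
  have ode': "\<psi>' u * \<psi> u * u = (\<gamma> + \<delta>) * \<psi> u - F u" if "u \<in> {uinf<..<u0}" for u
  proof -
    have "u > 0" using that uinf_pos by simp
    with psi_ode that show ?thesis unfolding F_def K_def
      by (auto simp: field_simps)
  qed
  have e_deriv: "(e has_real_derivative (- \<delta> * \<beta> * K + \<delta> * e u / (u * \<psi> u))) (at u)"
    if u: "u \<in> {uinf<..<u0}" for u
  proof -
    have up: "u > 0" using u uinf_pos by simp
    have pp: "\<psi> u > 0" using u psi_pos by auto
    have "(e has_real_derivative (\<delta> * (- \<beta> * K + \<gamma> / u) - \<delta> * \<psi>' u)) (at u)"
      unfolding e_def using F_deriv[OF up] psi_deriv u
      by (auto intro!: derivative_eq_intros)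
    moreover have "\<delta> * (- \<beta> * K + \<gamma> / u) - \<delta> * \<psi>' u = - \<delta> * \<beta> * K + \<delta> * e u / (u * \<psi> u)"
    proof -
      have H: "F u + u * (\<psi> u * \<psi>' u) = \<delta> * \<psi> u + \<gamma> * \<psi> u"
        using ode'[OF u] by (simp add: algebra_simps)
      have H2: "\<delta> * (\<delta> * (u * \<psi> u)) + \<delta> * (\<gamma> * (u * \<psi> u)) =
        \<delta> * (u * F u) + \<delta> * (u * (u * (\<psi> u * \<psi>' u)))"
      proof -
        have "\<delta> * u * (F u + u * (\<psi> u * \<psi>' u)) = \<delta> * u * (\<delta> * \<psi> u + \<gamma> * \<psi> u)"
          using H by simp
        then show ?thesis by (simp add: algebra_simps)
      qed
      show ?thesis unfolding e_def using up pp H2 by (simp add: field_simps)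
    qed
    ultimately show ?thesis by simp
  qed
  have e_cont: "continuous_on {uinf<..u0} e"
    unfolding e_def
    by (intro continuous_intros continuous_on_subset[OF F_cont] psi_cont) auto
  have e_pos: "\<forall>u\<in>{uinf<..u0}. e u > 0"
  proof (rule ccontr)
    assume "\<not> ?thesis"
    then obtain v where v: "v \<in> {uinf<..u0}" "e v \<le> 0" by force
    define T where "T = {x \<in> {v..u0}. e x \<le> (\<lambda>_. 0) x}"
    have "continuous_on {v..u0} e" using v by (intro continuous_on_subset[OF e_cont]) auto
    then have "closed T" unfolding T_def
      by (intro continuous_on_closed_Collect_le continuous_intros) auto
    moreover have "bounded T" unfolding T_def by (rule bounded_subset[of "{v..u0}"]) auto
    ultimately have "compact T" using compact_eq_bounded_closed by blast
    moreover have "v \<in> T" using v unfolding T_def by auto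
    ultimately obtain m where m: "m \<in> T" "\<forall>t\<in>T. t \<le> m"
      using compact_attains_sup by blast
    have mv: "v \<le> m" "m \<le> u0" "e m \<le> 0" using m unfolding T_def by auto
    have "m \<noteq> u0" using mv e_u0 by auto
    then have mu: "m \<in> {uinf<..<u0}" using mv v by auto
    have mpos: "m > 0" using mu uinf_pos by simp
    have "\<psi> m > 0" using mu psi_pos by auto
    then have "\<delta> * e m / (m * \<psi> m) \<le> 0"
      using mv mpos pos by (simp add: divide_nonpos_pos mult_nonneg_nonpos)
    then have l: "- \<delta> * \<beta> * K + \<delta> * e m / (m * \<psi> m) < 0"
    proof -
      have "\<delta> * \<beta> * K > 0" using pos K_pos by simp
      then show ?thesis using \<open>\<delta> * e m / (m * \<psi> m) \<le> 0\<close> by linarith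
    qed
    obtain d where d: "d > 0" "\<forall>h>0. h < d \<longrightarrow> e m > e (m + h)"
      using DERIV_neg_dec_right[OF e_deriv[OF mu] l] by blast
    define h where "h = min (d/2) (u0 - m)"
    have h: "h > 0" "h < d" "m + h \<le> u0" using d mu unfolding h_def by auto
    then have "e (m + h) < e m" using d by auto
    then have "m + h \<in> T" unfolding T_def using mv h by auto
    then show False using m h by auto
  qed
  have ev: "eventually (\<lambda>u. u \<in> {uinf<..<u0}) (at_right uinf)"
    using eventually_at_right_real[OF uinf_u0] .
  have F_lim: "(F \<longlongrightarrow> 0) (at_right uinf)"
  proof -
    have "isCont F uinf"
      using F_cont uinf_pos continuous_on_interior[of "{0<..}" F uinf]
        continuous_on_subset[OF F_cont] unfolding F_def
      by (auto intro!: continuous_intros)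
    then have "(F \<longlongrightarrow> F uinf) (at_right uinf)"
      by (simp add: isCont_def filterlim_at_split)
    then show ?thesis using F_uinf by simp
  qed
  have psi_lim: "(\<psi> \<longlongrightarrow> 0) (at_right uinf)"
  proof (rule tendsto_sandwich[of "\<lambda>_. 0" _ _ "\<lambda>u. F u / \<delta>"])
    show "eventually (\<lambda>u. 0 \<le> \<psi> u) (at_right uinf)"
      using ev
    proof eventually_elim
      case (elim u)
      then have "u \<in> {uinf<..u0}" by auto
      then show ?case using psi_pos less_imp_le by blast
    qed
    show "eventually (\<lambda>u. \<psi> u \<le> F u / \<delta>) (at_right uinf)"
      using ev
    proof eventually_elim
      case (elim u)
      then have "e u > 0" using e_pos by auto
      then show ?case unfolding e_def using pos by (simp add: field_simps)
    qed
    show "((\<lambda>_. 0) \<longlongrightarrow> (0::real)) (at_right uinf)" by simp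
    show "((\<lambda>u. F u / \<delta>) \<longlongrightarrow> 0) (at_right uinf)"
      using tendsto_divide[OF F_lim tendsto_const[of \<delta>]] pos by simp
  qed
  have Y_lim: "((\<lambda>u. e u / (\<beta> * \<delta>)) \<longlongrightarrow> 0) (at_right uinf)"
  proof -
    have "((\<lambda>u. (F u - \<delta> * \<psi> u) / (\<beta> * \<delta>)) \<longlongrightarrow> (0 - \<delta> * 0) / (\<beta> * \<delta>)) (at_right uinf)"
      by (intro tendsto_intros F_lim psi_lim) (use pos in simp)
    then show ?thesis unfolding e_def by simp
  qed
  have XY: "E * exp (- \<delta> * \<phi> u)
              + S * exp ((\<beta> / \<gamma>) * R) * exp (- \<delta> * \<phi> u)
                * integral {u..u0} (\<lambda>v. exp (\<delta> * \<phi> v)) = e u / (\<beta> * \<delta>)"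
    if u: "u \<in> {uinf<..<u0}" for u
  proof -
    have up: "u > 0" using u uinf_pos by simp
    define a where "a = (uinf + u) / 2"
    have a: "uinf < a" "a < u" using u unfolding a_def by auto
    have sub: "{a..u0} \<subseteq> {uinf<..u0}" using a by auto
    define h where "h = (\<lambda>\<xi>::real. 1 / (\<xi> * \<psi> \<xi>))"
    have hc: "continuous_on {a..u0} h"
      unfolding h_def
    proof (intro continuous_intros continuous_on_subset[OF psi_cont sub])
      show "\<forall>x\<in>{a..u0}. x * \<psi> x \<noteq> 0"
      proof
        fix x assume "x \<in> {a..u0}"
        then have "x \<in> {uinf<..u0}" using sub by auto
        then show "x * \<psi> x \<noteq> 0" using psi_pos uinf_pos by force
      qed
    qed
    define \<Phi> where "\<Phi> = (\<lambda>x. integral {x..u0} h)"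
    have \<Phi>\<phi>: "\<phi> x = \<Phi> x" if "x \<in> {a..u0}" for x
      using phi_def sub that unfolding \<Phi>_def h_def by auto
    have \<Phi>c: "continuous_on {a..u0} \<Phi>"
      unfolding \<Phi>_def by (rule indefinite_integral_continuous_1'[OF integrable_continuous_interval[OF hc]])
    have \<Phi>d: "(\<Phi> has_real_derivative (- h x)) (at x)" if "a < x" "x < u0" for x
      unfolding \<Phi>_def using deriv_integral_lower[OF hc that] .
    have gc: "continuous_on {a..u0} (\<lambda>v. exp (\<delta> * \<phi> v))"
    proof -
      have "continuous_on {a..u0} (\<lambda>v. exp (\<delta> * \<Phi> v))"
        by (intro continuous_intros \<Phi>c)
      then show ?thesis by (rule continuous_on_eq) (simp add: \<Phi>\<phi>)
    qed
    define G where "G = (\<lambda>x. integral {x..u0} (\<lambda>v. exp (\<delta> * \<phi> v)))"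
    have Gc: "continuous_on {a..u0} G"
      unfolding G_def by (rule indefinite_integral_continuous_1'[OF integrable_continuous_interval[OF gc]])
    have Gd: "(G has_real_derivative (- exp (\<delta> * \<phi> x))) (at x)" if "a < x" "x < u0" for x
      unfolding G_def using deriv_integral_lower[OF gc that] .
    define Y where "Y = (\<lambda>x. e x / (\<beta> * \<delta>))"
    have Yc: "continuous_on {a..u0} Y"
      unfolding Y_def by (intro continuous_intros continuous_on_subset[OF e_cont sub]) (use pos in auto)
    have Yd: "(Y has_real_derivative ((- \<delta> * \<beta> * K + \<delta> * e x / (x * \<psi> x)) / (\<beta> * \<delta>))) (at x)"
      if "a < x" "x < u0" for x
      unfolding Y_def using that a by (intro DERIV_cdivide e_deriv) auto
    define Z where "Z = (\<lambda>x. E + K * G x - Y x * exp (\<delta> * \<Phi> x))"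
    have Zc: "continuous_on {u..u0} Z"
    proof -
      have "continuous_on {a..u0} Z"
        unfolding Z_def by (intro continuous_intros Gc Yc \<Phi>c)
      then show ?thesis by (rule continuous_on_subset) (use a in auto)
    qed
    have Zd: "(Z has_real_derivative 0) (at x)" if x: "u < x" "x < u0" for x
    proof -
      have x': "a < x" "x < u0" using x a by auto
      have xp: "x > 0" using x' a uinf_pos by simp
      have px: "\<psi> x > 0" using x' a psi_pos by auto
      have d1: "((\<lambda>x. E + K * G x) has_real_derivative (0 + K * (- exp (\<delta> * \<phi> x)))) (at x)"
        by (intro DERIV_add DERIV_const DERIV_cmult Gd[OF x'])
      have d2: "((\<lambda>x. exp (\<delta> * \<Phi> x)) has_real_derivative (exp (\<delta> * \<Phi> x) * (\<delta> * (- h x)))) (at x)"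
        by (intro DERIV_fun_exp DERIV_cmult \<Phi>d[OF x'])
      have d3: "((\<lambda>x. Y x * exp (\<delta> * \<Phi> x)) has_real_derivative
          ((- \<delta> * \<beta> * K + \<delta> * e x / (x * \<psi> x)) / (\<beta> * \<delta>) * exp (\<delta> * \<Phi> x)
           + (exp (\<delta> * \<Phi> x) * (\<delta> * (- h x))) * Y x)) (at x)"
        by (intro DERIV_mult Yd[OF x'] d2)
      have d4: "(Z has_real_derivative (0 + K * (- exp (\<delta> * \<phi> x))) -
          ((- \<delta> * \<beta> * K + \<delta> * e x / (x * \<psi> x)) / (\<beta> * \<delta>) * exp (\<delta> * \<Phi> x)
           + (exp (\<delta> * \<Phi> x) * (\<delta> * (- h x))) * Y x)) (at x)"
        unfolding Z_def by (intro DERIV_diff d1 d3)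
      have "(0 + K * (- exp (\<delta> * \<phi> x))) -
          ((- \<delta> * \<beta> * K + \<delta> * e x / (x * \<psi> x)) / (\<beta> * \<delta>) * exp (\<delta> * \<Phi> x)
           + (exp (\<delta> * \<Phi> x) * (\<delta> * (- h x))) * Y x) = 0"
        using \<Phi>\<phi>[of x] x' xp px pos unfolding Y_def h_def by (simp add: field_simps)
      with d4 show ?thesis by simp
    qed
    have "Z u0 = Z u" using DERIV_isconst_end[of u u0 Z] u Zc Zd by auto
    moreover have "Z u0 = 0"
    proof -
      have "\<Phi> u0 = 0" "G u0 = 0" unfolding \<Phi>_def G_def by auto
      then show ?thesis unfolding Z_def Y_def e_def F_u0 psi_init using pos by (simp add: field_simps)
    qed
    ultimately have Zu: "E + K * G u = Y u * exp (\<delta> * \<phi> u)"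
      unfolding Z_def using \<Phi>\<phi>[of u] a u by auto
    have "E * exp (- \<delta> * \<phi> u) + K * exp (- \<delta> * \<phi> u) * G u
        = exp (- \<delta> * \<phi> u) * (E + K * G u)" by (simp add: algebra_simps)
    also have "\<dots> = Y u" unfolding Zu by (simp add: exp_minus field_simps)
    finally show ?thesis unfolding K_def G_def Y_def .
  qed
  have "((\<lambda>u. E * exp (- \<delta> * \<phi> u)
              + S * exp ((\<beta> / \<gamma>) * R) * exp (- \<delta> * \<phi> u)
                * integral {u..u0} (\<lambda>v. exp (\<delta> * \<phi> v))) \<longlongrightarrow> 0) (at_right uinf)"
    using Y_lim tendsto_cong[OF eventually_mono[OF ev XY]] by simp
  with psi_lim show ?thesis by simp
qed

end
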